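(* In the hexagonal three-direction setting with the random model described in the context, let $k\ge1$, let $X=\sum_{r\in R}X_r$ be the number of zero measurements and $N_R^0=\mathbb{E}[X]=\sum_{r\in R}(1-|r|/|C|)^k$. Set $\overline{p}_d=1-\min_{r\in R}\frac{|r|}{|C|}=1-\frac{2(d+1)}{3d^2+1}$. Then for every $\delta>0$, \[ \Pr\big[|X-N_R^0|\ge\delta\big]\le 2\exp\Big(-\frac{1-\overline{p}_d^{\,2}}{18\,(1-\overline{p}_d^{\,2k})}\,\delta^2\Big). \]
   Context: Hexagonal setting. Let $d\ge 3$ be an odd integer. The set of cells is $C=\{(i_1,i_2)\in\mathbb{Z}^2 : |i_1|\le (d-1)/2,\ |i_2|\le (d-1)/2,\ |i_1+i_2|\le (d-1)/2\}$ (the cell centers are $i_1 d^1+i_2 d^2$ with $d^1=\tfrac12(\sqrt3,1)$, $d^2=(0,1)$, forming a hexagon), so $|C|=(3d^2+1)/4$. There are three directions of projection rays: $R_1$ consists of the $d$ rays $\{(i_1,i_2)\in C: i_1=a\}$, $R_2$ of the $d$ rays $\{(i_1,i_2)\in C: i_2=a\}$, and $R_3$ of the $d$ rays $\{(i_1,i_2)\in C: i_1+i_2=a\}$, for $a\in\{-(d-1)/2,\dots,(d-1)/2\}$; a ray is identified with the set of cells it meets, $|r|$ denotes its number of cells, and $R=R_1\cup R_2\cup R_3$, $|R|=3d$. Each cell $c$ lies on exactly one ray $r_i(c)\in R_i$ for each $i=1,2,3$. Random model: $k$ cells are drawn independently and uniformly from $C$ (with replacement; a cell may be drawn several times). For $r\in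 R$, $X_r\in\{0,1\}$ equals $1$ (a "zero measurement") iff none of the drawn cells lies on $r$. *)

theory Defs
  imports "HOL-Probability.Probability"
begin

definition hex_half :: "nat \<Rightarrow> int" where
  "hex_half d = (int d - 1) div 2"

definition hex_cells :: "nat \<Rightarrow> (int \<times> int) set" where
  "hex_cells d = {(i1, i2). \<bar>i1\<bar> \<le> hex_half d \<and> \<bar>i2\<bar> \<le> hex_half d \<and> \<bar>i1 + i2\<bar> \<le> hex_half d}"

definition hex_ray :: "nat \<Rightarrow> nat \<Rightarrow> int \<Rightarrow> (int \<times> int) set" where
  "hex_ray d j a = {c \<in> hex_cells d.
     (if j = 1 then fst c else if j = 2 then snd c else fst c + snd c) = a}"

definition hex_rays :: "nat \<Rightarrow> (nat \<times> int) set" where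
  "hex_rays d = {1, 2, 3} \<times> {- hex_half d .. hex_half d}"

definition draw_pmf :: "nat \<Rightarrow> nat \<Rightarrow> (nat \<Rightarrow> int \<times> int) pmf" where
  "draw_pmf d k = Pi_pmf {0..<k} (0, 0) (\<lambda>_. pmf_of_set (hex_cells d))"

definition zero_meas :: "nat \<Rightarrow> nat \<Rightarrow> nat \<times> int \<Rightarrow> (nat \<Rightarrow> int \<times> int) \<Rightarrow> real" where
  "zero_meas d k r \<omega> = (if \<forall>i<k. \<omega> i \<notin> hex_ray d (fst r) (snd r) then 1 else 0)"

definition zero_count :: "nat \<Rightarrow> nat \<Rightarrow> (nat \<Rightarrow> int \<times> int) \<Rightarrow> real" where
  "zero_count d k \<omega> = (\<Sum>r\<in>hex_rays d. zero_meas d k r \<omega>)"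

definition expected_zeros :: "nat \<Rightarrow> nat \<Rightarrow> real" where
  "expected_zeros d k = (\<Sum>r\<in>hex_rays d.
      (1 - real (card (hex_ray d (fst r) (snd r))) / real (card (hex_cells d))) ^ k)"

definition pbar :: "nat \<Rightarrow> real" where
  "pbar d = 1 - Min ((\<lambda>r. real (card (hex_ray d (fst r) (snd r))) / real (card (hex_cells d))) ` hex_rays d)"

end

theory Submission imports Defs begin

lemma half_nonneg: "hex_half d \<ge> 0 \<or> d = 0"
  by (auto simp: hex_half_def)

lemma finite_cells: "finite (hex_cells d)"
proof -
  have "hex_cells d \<subseteq> {-hex_half d..hex_half d} \<times> {-hex_half d..hex_half d}"
    by (auto simp: hex_cells_def)
  then show ?thesis by (meson finite_SigmaI finite_atLeastAtMost_int finite_subset)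
qed

lemma cells_ne: "d \<ge> 1 \<Longrightarrow> (0,0) \<in> hex_cells d"
  by (auto simp: hex_cells_def hex_half_def)

lemma ray_sub: "hex_ray d j a \<subseteq> hex_cells d"
  by (auto simp: hex_ray_def)

lemma finite_ray: "finite (hex_ray d j a)"
  using finite_subset[OF ray_sub finite_cells] .

lemma finite_rays: "finite (hex_rays d)"
  by (auto simp: hex_rays_def)

lemma rays_through:
  assumes "c \<in> hex_cells d"
  shows "{r \<in> hex_rays d. c \<in> hex_ray d (fst r) (snd r)} = {(1, fst c), (2, snd c), (3, fst c + snd c)}"
  using assms by (cases c) (auto simp: hex_rays_def hex_ray_def hex_cells_def)

lemma card_rays_through:
  assumes "c \<in> hex_cells d"
  shows "card {r \<in> hex_rays d. c \<in> hex_ray d (fst r) (snd r)} = 3"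
  unfolding rays_through[OF assms] by simp

lemma sum_card_rays:
  "(\<Sum>r\<in>hex_rays d. card (hex_ray d (fst r) (snd r))) = 3 * card (hex_cells d)"
proof -
  have "(\<Sum>r\<in>hex_rays d. card (hex_ray d (fst r) (snd r)))
      = (\<Sum>r\<in>hex_rays d. \<Sum>c\<in>hex_cells d. if c \<in> hex_ray d (fst r) (snd r) then 1 else (0::nat))"
  proof (rule sum.cong[OF refl])
    fix r
    show "card (hex_ray d (fst r) (snd r)) = (\<Sum>c\<in>hex_cells d. if c \<in> hex_ray d (fst r) (snd r) then 1 else (0::nat))"
    proof -
      have "card {c \<in> hex_cells d. c \<in> R} = (\<Sum>c\<in>hex_cells d. if c \<in> R then 1 else (0::nat))" for R
        by (simp add: sum.inter_filter[symmetric] finite_cells)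
      moreover have "{c \<in> hex_cells d. c \<in> hex_ray d (fst r) (snd r)} = hex_ray d (fst r) (snd r)"
        using ray_sub[of d "fst r" "snd r"] by blast
      ultimately show ?thesis by (metis (no_types))
    qed
  qed
  also have "\<dots> = (\<Sum>c\<in>hex_cells d. \<Sum>r\<in>hex_rays d. if c \<in> hex_ray d (fst r) (snd r) then 1 else (0::nat))"
    by (rule sum.swap)
  also have "\<dots> = (\<Sum>c\<in>hex_cells d. 3)"
  proof (rule sum.cong[OF refl])
    fix c assume c: "c \<in> hex_cells d"
    have "(\<Sum>r\<in>hex_rays d. if c \<in> hex_ray d (fst r) (snd r) then 1 else (0::nat))
        = card {r \<in> hex_rays d. c \<in> hex_ray d (fst r) (snd r)}"
      by (simp add: sum.inter_filter[symmetric] finite_rays)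
    then show "(\<Sum>r\<in>hex_rays d. if c \<in> hex_ray d (fst r) (snd r) then 1 else (0::nat)) = 3"
      using card_rays_through[OF c] by simp
  qed
  finally show ?thesis by simp
qed


lemma ray1_eq: "\<bar>a\<bar> \<le> hex_half d \<Longrightarrow>
  hex_ray d 1 a = (\<lambda>t. (a,t)) ` {max (-hex_half d) (-hex_half d - a) .. min (hex_half d) (hex_half d - a)}"
  by (auto simp: hex_ray_def hex_cells_def image_iff)

lemma ray2_eq: "\<bar>a\<bar> \<le> hex_half d \<Longrightarrow>
  hex_ray d 2 a = (\<lambda>t. (t,a)) ` {max (-hex_half d) (-hex_half d - a) .. min (hex_half d) (hex_half d - a)}"
  by (auto simp: hex_ray_def hex_cells_def image_iff)

lemma ray3_eq: "\<bar>a\<bar> \<le> hex_half d \<Longrightarrow>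
  hex_ray d 3 a = (\<lambda>t. (t,a-t)) ` {max (-hex_half d) (a - hex_half d) .. min (hex_half d) (a + hex_half d)}"
  by (auto simp: hex_ray_def hex_cells_def image_iff)

lemma card_ray:
  assumes "\<bar>a\<bar> \<le> hex_half d" "j \<in> {1,2,3}"
  shows "int (card (hex_ray d j a)) = 2 * hex_half d + 1 - \<bar>a\<bar>"
proof -
  have i1: "inj (\<lambda>t::int. (a,t))" "inj (\<lambda>t::int. (t,a))" "inj (\<lambda>t::int. (t,a-t))"
    by (auto simp: inj_def)
  have ab: "\<bar>a\<bar> \<le> hex_half d" by fact
  from assms(2) consider "j = 1" | "j = 2" | "j = 3" by auto
  then show ?thesis
  proof cases
    case 1 then show ?thesis unfolding 1 ray1_eq[OF ab]
      by (subst card_image[OF inj_on_subset[OF i1(1)]]) (use ab in \<open>auto simp: abs_if\<close>)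
  next
    case 2 then show ?thesis unfolding 2 ray2_eq[OF ab]
      by (subst card_image[OF inj_on_subset[OF i1(2)]]) (use ab in \<open>auto simp: abs_if\<close>)
  next
    case 3 then show ?thesis unfolding 3 ray3_eq[OF ab]
      by (subst card_image[OF inj_on_subset[OF i1(3)]]) (use ab in \<open>auto simp: abs_if\<close>)
  qed
qed

lemma sum_abs_int: "(\<Sum>a\<in>{-int n..int n}. \<bar>a\<bar>) = int n * (int n + 1)"
proof (induction n)
  case 0 then show ?case by simp
next
  case (Suc n)
  have e: "{-int (Suc n)..int (Suc n)} = insert (-int (Suc n)) (insert (int (Suc n)) {-int n..int n})"
    by auto
  show ?case unfolding e using Suc by (simp add: algebra_simps)
qed

lemma cells_union: "hex_cells d = (\<Union>a\<in>{-hex_half d..hex_half d}. hex_ray d 1 a)"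
  by (auto simp: hex_cells_def hex_ray_def)

lemma card_cells:
  assumes "hex_half d \<ge> 0"
  shows "int (card (hex_cells d)) = 3 * (hex_half d)^2 + 3 * hex_half d + 1"
proof -
  obtain n where n: "hex_half d = int n" using assms nonneg_int_cases by metis
  have "card (hex_cells d) = (\<Sum>a\<in>{-hex_half d..hex_half d}. card (hex_ray d 1 a))"
    unfolding cells_union
  proof (rule card_UN_disjoint)
    show "\<forall>i\<in>{- hex_half d..hex_half d}. finite (hex_ray d 1 i)" using finite_ray by blast
  qed (auto simp: hex_ray_def)
  then have "int (card (hex_cells d)) = (\<Sum>a\<in>{-hex_half d..hex_half d}. int (card (hex_ray d 1 a)))"
    by simp
  also have "\<dots> = (\<Sum>a\<in>{-hex_half d..hex_half d}. 2 * hex_half d + 1 - \<bar>a\<bar>)"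
    by (rule sum.cong[OF refl], rule card_ray) auto
  also have "\<dots> = (\<Sum>a\<in>{-hex_half d..hex_half d}. 2 * hex_half d + 1) - (\<Sum>a\<in>{-hex_half d..hex_half d}. \<bar>a\<bar>)"
    by (simp add: sum_subtractf)
  also have "\<dots> = 3 * (hex_half d)^2 + 3 * hex_half d + 1"
    unfolding n sum_abs_int by (simp add: power2_eq_square algebra_simps)
  finally show ?thesis .
qed


lemma half_props:
  assumes "odd d" "d \<ge> 3"
  shows "hex_half d \<ge> 1" "real d = 2 * real_of_int (hex_half d) + 1"
proof -
  obtain m where m: "d = 2*m+1" using assms(1) oddE by blast
  have "hex_half d = int m" unfolding hex_half_def m by simp
  then show "hex_half d \<ge> 1" "real d = 2 * real_of_int (hex_half d) + 1" using m assms(2) by auto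
qed

lemma pbar_val:
  assumes "odd d" "d \<ge> 3"
  shows "pbar d = 1 - 2 * (real d + 1) / (3 * (real d)\<^sup>2 + 1)"
proof -
  define h where "h = hex_half d"
  have h1: "h \<ge> 1" using half_props[OF assms] h_def by simp
  have "real (card (hex_cells d)) = real_of_int (int (card (hex_cells d)))" by simp
  also have "\<dots> = real_of_int (3 * h^2 + 3 * h + 1)" using card_cells[of d] h1 h_def by simp
  also have "\<dots> = 3 * (real_of_int h)^2 + 3 * h + 1" by simp
  finally have N: "real (card (hex_cells d)) = 3 * (real_of_int h)^2 + 3 * h + 1" .
  have hr: "real_of_int h \<ge> 1" using h1 by simp
  have Npos: "real (card (hex_cells d)) > 0" unfolding N using hr
    by (simp add: add_pos_nonneg)
  let ?f = "\<lambda>r. real (card (hex_ray d (fst r) (snd r))) / real (card (hex_cells d))"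
  have "Min (?f ` hex_rays d) = (real_of_int h + 1) / real (card (hex_cells d))"
  proof (rule Min_eqI)
    show "finite (?f ` hex_rays d)" using finite_rays by simp
  next
    fix y assume "y \<in> ?f ` hex_rays d"
    then obtain r where r0: "r \<in> hex_rays d" "y = ?f r" by blast
    obtain j a where ja: "r = (j,a)" by (cases r)
    have r: "j \<in> {1,2,3}" "\<bar>a\<bar> \<le> h" using r0 ja by (auto simp: hex_rays_def h_def)
    have y: "y = ?f (j,a)" using r0 ja by simp
    have "int (card (hex_ray d j a)) = 2*h+1-\<bar>a\<bar>" using card_ray[of a d j] r h_def by simp
    then have "real_of_int (int (card (hex_ray d j a))) = real_of_int (2*h+1-\<bar>a\<bar>)"
      by (simp only:)
    then have e: "real (card (hex_ray d j a)) = real_of_int (2*h+1-\<bar>a\<bar>)"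
      by (simp only: of_int_of_nat_eq)
    have "h + 1 \<le> 2*h+1-\<bar>a\<bar>" using r(2) by linarith
    then have "real_of_int (h + 1) \<le> real_of_int (2*h+1-\<bar>a\<bar>)" by (simp only: of_int_le_iff)
    then have "real (card (hex_ray d j a)) \<ge> real_of_int h + 1" using e by simp
    then show "(real_of_int h + 1) / real (card (hex_cells d)) \<le> y"
      using y Npos by (simp add: divide_right_mono)
  next
    have r: "(1, h) \<in> hex_rays d" using h1 by (auto simp: hex_rays_def h_def)
    have "int (card (hex_ray d 1 h)) = 2*h+1-\<bar>h\<bar>" using card_ray[of h d 1] h_def h1 by simp
    then have "real_of_int (int (card (hex_ray d 1 h))) = real_of_int (2*h+1-\<bar>h\<bar>)"
      by (simp only:)
    then have e: "real (card (hex_ray d 1 h)) = real_of_int (2*h+1-\<bar>h\<bar>)"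
      by (simp only: of_int_of_nat_eq)
    have "2*h+1-\<bar>h\<bar> = h + 1" using h1 by simp
    then have "real (card (hex_ray d 1 h)) = real_of_int h + 1" using e by simp
    then have fv: "?f (1,h) = (real_of_int h + 1) / real (card (hex_cells d))" by simp
    show "(real_of_int h + 1) / real (card (hex_cells d)) \<in> ?f ` hex_rays d"
      by (rule image_eqI[where f="?f", OF fv[symmetric] r])
  qed
  then have "pbar d = 1 - (real_of_int h + 1) / (3 * (real_of_int h)^2 + 3 * h + 1)"
    unfolding pbar_def N by simp
  moreover have "real d = 2 * real_of_int h + 1" using half_props[OF assms] h_def by simp
  moreover have "2 * (2 * real_of_int h + 1 + 1) / (3 * (2 * real_of_int h + 1)\<^sup>2 + 1)
      = (real_of_int h + 1) / (3 * (real_of_int h)^2 + 3 * h + 1)"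
  proof -
    have e1: "3 * (2 * real_of_int h + 1)\<^sup>2 + 1 = 4 * (3 * (real_of_int h)^2 + 3 * h + 1)"
      by (simp add: power2_eq_square algebra_simps)
    have e2: "2 * (2 * real_of_int h + 1 + 1) = 4 * (real_of_int h + 1)" by simp
    show ?thesis unfolding e1 e2 by (rule mult_divide_mult_cancel_left) simp
  qed
  ultimately show ?thesis by simp
qed

lemma pbar_bounds:
  assumes "odd d" "d \<ge> 3"
  shows "0 < pbar d" "pbar d < 1"
proof -
  have d: "real d \<ge> 3" using assms by simp
  have dd: "real d * real d \<ge> 3 * real d" using d by (intro mult_right_mono) auto
  have "2 * (real d + 1) / (3 * (real d)\<^sup>2 + 1) < 1"
  proof -
    have "1 + 2*real d < 3*(real d*real d)" using d dd by linarith
    then show ?thesis by (simp add: divide_less_eq_1 power2_eq_square)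
  qed
  moreover have "2 * (real d + 1) / (3 * (real d)\<^sup>2 + 1) > 0" using d by (intro divide_pos_pos) (auto simp: add_nonneg_pos)
  ultimately show "0 < pbar d" "pbar d < 1" using pbar_val[OF assms] by auto
qed

lemma card_cells_pos: "d \<ge> 1 \<Longrightarrow> card (hex_cells d) > 0"
  using cells_ne[of d] finite_cells[of d] card_gt_0_iff by blast

lemma q_bounds:
  assumes "d \<ge> 1" "r \<in> hex_rays d"
  shows "0 \<le> 1 - real (card (hex_ray d (fst r) (snd r))) / real (card (hex_cells d))"
        "1 - real (card (hex_ray d (fst r) (snd r))) / real (card (hex_cells d)) \<le> pbar d"
proof -
  have "card (hex_ray d (fst r) (snd r)) \<le> card (hex_cells d)"
    by (rule card_mono[OF finite_cells ray_sub])
  then show "0 \<le> 1 - real (card (hex_ray d (fst r) (snd r))) / real (card (hex_cells d))"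
    using card_cells_pos[OF assms(1)] by (simp add: field_simps)
  have "Min ((\<lambda>r. real (card (hex_ray d (fst r) (snd r))) / real (card (hex_cells d))) ` hex_rays d)
      \<le> real (card (hex_ray d (fst r) (snd r))) / real (card (hex_cells d))"
    by (rule Min_le) (use finite_rays assms(2) in auto)
  then show "1 - real (card (hex_ray d (fst r) (snd r))) / real (card (hex_cells d)) \<le> pbar d"
    unfolding pbar_def by simp
qed


definition Ud :: "nat \<Rightarrow> (int \<times> int) pmf" where "Ud d = pmf_of_set (hex_cells d)"
definition Mp :: "nat \<Rightarrow> nat \<Rightarrow> (nat \<Rightarrow> int \<times> int) pmf" where
  "Mp d m = Pi_pmf {0..<m} (0,0) (\<lambda>_. Ud d)"
definition Yc :: "nat \<Rightarrow> (nat \<times> int) set \<Rightarrow> nat \<Rightarrow> (nat \<Rightarrow> int \<times> int) \<Rightarrow> real" where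
  "Yc d A m \<omega> = (\<Sum>r\<in>A. if \<forall>i<m. \<omega> i \<notin> hex_ray d (fst r) (snd r) then 1 else 0)"
definition qr :: "nat \<Rightarrow> nat \<times> int \<Rightarrow> real" where
  "qr d r = 1 - real (card (hex_ray d (fst r) (snd r))) / real (card (hex_cells d))"
definition mu :: "nat \<Rightarrow> (nat \<times> int) set \<Rightarrow> nat \<Rightarrow> real" where
  "mu d A m = (\<Sum>r\<in>A. qr d r ^ m)"
definition Dc :: "nat \<Rightarrow> (nat \<times> int) set \<Rightarrow> nat \<Rightarrow> int \<times> int \<Rightarrow> real" where
  "Dc d A m c = mu d {r\<in>A. c \<notin> hex_ray d (fst r) (snd r)} m - mu d A (Suc m)"

lemma Mp_Suc: "Mp d (Suc m) = map_pmf (\<lambda>(y,f). f(m:=y)) (pair_pmf (Ud d) (Mp d m))"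
  unfolding Mp_def atLeast0_lessThan_Suc by (rule Pi_pmf_insert) auto

lemma Yc_Suc:
  assumes "finite A"
  shows "Yc d A (Suc m) (fun_upd \<omega> m c) = Yc d {r\<in>A. c \<notin> hex_ray d (fst r) (snd r)} m \<omega>"
proof -
  have "(\<forall>i<Suc m. (fun_upd \<omega> m c) i \<notin> R) \<longleftrightarrow> (c \<notin> R \<and> (\<forall>i<m. \<omega> i \<notin> R))" for R
    by (auto simp: less_Suc_eq)
  then have "Yc d A (Suc m) (fun_upd \<omega> m c) = (\<Sum>r\<in>A. if c \<notin> hex_ray d (fst r) (snd r) then
        (if \<forall>i<m. \<omega> i \<notin> hex_ray d (fst r) (snd r) then 1 else 0) else 0)"
    unfolding Yc_def by (intro sum.cong) auto
  also have "\<dots> = Yc d {r\<in>A. c \<notin> hex_ray d (fst r) (snd r)} m \<omega>"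
    unfolding Yc_def using assms by (simp add: sum.inter_filter)
  finally show ?thesis .
qed

lemma qr_bounds: "d \<ge> 1 \<Longrightarrow> r \<in> hex_rays d \<Longrightarrow> 0 \<le> qr d r \<and> qr d r \<le> pbar d"
  using q_bounds[of d r] unfolding qr_def by auto

lemma one_minus_qr_nonneg: "0 \<le> 1 - qr d r"
  unfolding qr_def by simp

lemma pbar_nonneg: "d \<ge> 1 \<Longrightarrow> 0 \<le> pbar d"
proof -
  assume d: "d \<ge> 1"
  have "(1,0) \<in> hex_rays d" using d by (auto simp: hex_rays_def hex_half_def)
  then show ?thesis using qr_bounds[OF d] by fastforce
qed

lemma sum_one_minus_qr:
  assumes "d \<ge> 1"
  shows "(\<Sum>r\<in>hex_rays d. 1 - qr d r) = 3"
proof -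
  have N: "real (card (hex_cells d)) > 0" using card_cells_pos[OF assms] by simp
  have "(\<Sum>r\<in>hex_rays d. 1 - qr d r) = (\<Sum>r\<in>hex_rays d. real (card (hex_ray d (fst r) (snd r)))) / real (card (hex_cells d))"
    unfolding qr_def by (simp add: sum_divide_distrib)
  also have "(\<Sum>r\<in>hex_rays d. real (card (hex_ray d (fst r) (snd r)))) = 3 * real (card (hex_cells d))"
    using arg_cong[OF sum_card_rays[of d], of real] by simp
  finally show ?thesis using N by simp
qed

lemma Dc_alt:
  assumes "finite A"
  shows "Dc d A m c = (\<Sum>r\<in>A. qr d r ^ m * (1 - qr d r)) - (\<Sum>r\<in>A. if c \<in> hex_ray d (fst r) (snd r) then qr d r ^ m else 0)"
proof -
  have "mu d {r\<in>A. c \<notin> hex_ray d (fst r) (snd r)} m = (\<Sum>r\<in>A. if c \<notin> hex_ray d (fst r) (snd r) then qr d r ^ m else 0)"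
    unfolding mu_def using assms by (simp add: sum.inter_filter)
  also have "\<dots> = (\<Sum>r\<in>A. qr d r ^ m - (if c \<in> hex_ray d (fst r) (snd r) then qr d r ^ m else 0))"
    by (intro sum.cong) auto
  finally show ?thesis unfolding Dc_def mu_def
    by (simp add: sum_subtractf algebra_simps)
qed

lemma Dc_bounds:
  assumes "d \<ge> 1" "A \<subseteq> hex_rays d" "c \<in> hex_cells d"
  shows "Dc d A m c \<le> 3 * pbar d ^ m" "- (3 * pbar d ^ m) \<le> Dc d A m c"
proof -
  have fA: "finite A" using finite_subset[OF assms(2) finite_rays] .
  have qb: "\<And>r. r \<in> hex_rays d \<Longrightarrow> 0 \<le> qr d r \<and> qr d r \<le> pbar d" using qr_bounds[OF assms(1)] .
  have qm: "\<And>r. r \<in> hex_rays d \<Longrightarrow> 0 \<le> qr d r ^ m \<and> qr d r ^ m \<le> pbar d ^ m"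
    using qb by (auto intro: power_mono)
  have s1: "(\<Sum>r\<in>A. qr d r ^ m * (1 - qr d r)) \<le> (\<Sum>r\<in>hex_rays d. pbar d ^ m * (1 - qr d r))"
  proof -
    have "(\<Sum>r\<in>A. qr d r ^ m * (1 - qr d r)) \<le> (\<Sum>r\<in>A. pbar d ^ m * (1 - qr d r))"
      apply (intro sum_mono mult_right_mono)
      using qm qb assms(2) by (auto simp: qr_def)
    also have "\<dots> \<le> (\<Sum>r\<in>hex_rays d. pbar d ^ m * (1 - qr d r))"
      apply (rule sum_mono2[OF finite_rays assms(2)])
      using pbar_nonneg[OF assms(1)] one_minus_qr_nonneg by (auto intro: mult_nonneg_nonneg)
    finally show ?thesis .
  qed
  also have "\<dots> = 3 * pbar d ^ m"
    using sum_one_minus_qr[OF assms(1)] by (simp add: sum_distrib_left[symmetric])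
  finally have s1': "(\<Sum>r\<in>A. qr d r ^ m * (1 - qr d r)) \<le> 3 * pbar d ^ m" .
  have s2: "0 \<le> (\<Sum>r\<in>A. if c \<in> hex_ray d (fst r) (snd r) then qr d r ^ m else 0)"
    using qm assms(2) by (intro sum_nonneg) auto
  show "Dc d A m c \<le> 3 * pbar d ^ m" unfolding Dc_alt[OF fA] using s1' s2 by linarith
  have s3: "0 \<le> (\<Sum>r\<in>A. qr d r ^ m * (1 - qr d r))"
    using qm qb assms(2) by (intro sum_nonneg mult_nonneg_nonneg) (auto simp: qr_def)
  have "(\<Sum>r\<in>A. if c \<in> hex_ray d (fst r) (snd r) then qr d r ^ m else 0)
      \<le> (\<Sum>r\<in>hex_rays d. if c \<in> hex_ray d (fst r) (snd r) then pbar d ^ m else 0)"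
  proof -
    have "(\<Sum>r\<in>A. if c \<in> hex_ray d (fst r) (snd r) then qr d r ^ m else 0)
      \<le> (\<Sum>r\<in>A. if c \<in> hex_ray d (fst r) (snd r) then pbar d ^ m else 0)"
      using qm assms(2) by (intro sum_mono) auto
    also have "\<dots> \<le> (\<Sum>r\<in>hex_rays d. if c \<in> hex_ray d (fst r) (snd r) then pbar d ^ m else 0)"
      apply (rule sum_mono2[OF finite_rays assms(2)])
      using pbar_nonneg[OF assms(1)] by auto
    finally show ?thesis .
  qed
  also have "\<dots> = pbar d ^ m * real (card {r \<in> hex_rays d. c \<in> hex_ray d (fst r) (snd r)})"
    by (simp add: sum.inter_filter[symmetric] finite_rays)
  also have "\<dots> = 3 * pbar d ^ m" using card_rays_through[OF assms(3)] by simp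
  finally show "- (3 * pbar d ^ m) \<le> Dc d A m c" unfolding Dc_alt[OF fA] using s3 by linarith
qed

lemma Dc_mean:
  assumes "d \<ge> 1" "A \<subseteq> hex_rays d"
  shows "(\<Sum>c\<in>hex_cells d. Dc d A m c) = 0"
proof -
  have fA: "finite A" using finite_subset[OF assms(2) finite_rays] .
  have N: "real (card (hex_cells d)) > 0" using card_cells_pos[OF assms(1)] by simp
  have "(\<Sum>c\<in>hex_cells d. mu d {r\<in>A. c \<notin> hex_ray d (fst r) (snd r)} m)
     = (\<Sum>c\<in>hex_cells d. \<Sum>r\<in>A. if c \<notin> hex_ray d (fst r) (snd r) then qr d r ^ m else 0)"
    unfolding mu_def using fA by (simp add: sum.inter_filter)
  also have "\<dots> = (\<Sum>r\<in>A. \<Sum>c\<in>hex_cells d. if c \<notin> hex_ray d (fst r) (snd r) then qr d r ^ m else 0)"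
    by (rule sum.swap)
  also have "\<dots> = (\<Sum>r\<in>A. qr d r ^ m * real (card {c\<in>hex_cells d. c \<notin> hex_ray d (fst r) (snd r)}))"
    by (simp add: sum.inter_filter[symmetric] finite_cells mult.commute)
  also have "\<dots> = (\<Sum>r\<in>A. real (card (hex_cells d)) * qr d r ^ Suc m)"
  proof (intro sum.cong refl)
    fix r
    have "{c\<in>hex_cells d. c \<notin> hex_ray d (fst r) (snd r)} = hex_cells d - hex_ray d (fst r) (snd r)" by blast
    then have "card {c\<in>hex_cells d. c \<notin> hex_ray d (fst r) (snd r)} = card (hex_cells d) - card (hex_ray d (fst r) (snd r))"
      using card_Diff_subset[OF finite_ray ray_sub] by simp
    then have "real (card {c\<in>hex_cells d. c \<notin> hex_ray d (fst r) (snd r)}) = real (card (hex_cells d)) - real (card (hex_ray d (fst r) (snd r)))"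
      using card_mono[OF finite_cells ray_sub] by (simp add: of_nat_diff)
    also have "\<dots> = real (card (hex_cells d)) * qr d r" unfolding qr_def using N by (simp add: field_simps)
    finally show "qr d r ^ m * real (card {c\<in>hex_cells d. c \<notin> hex_ray d (fst r) (snd r)}) = real (card (hex_cells d)) * qr d r ^ Suc m"
      by simp
  qed
  also have "\<dots> = real (card (hex_cells d)) * mu d A (Suc m)" unfolding mu_def by (simp add: sum_distrib_left)
  finally show ?thesis unfolding Dc_def by (simp add: sum_subtractf)
qed


lemma Ud_set: "d \<ge> 1 \<Longrightarrow> set_pmf (Ud d) = hex_cells d"
  unfolding Ud_def using cells_ne[of d] finite_cells[of d] by (intro set_pmf_of_set) auto

lemma Dc_expect:
  assumes "d \<ge> 1" "A \<subseteq> hex_rays d"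
  shows "measure_pmf.expectation (Ud d) (\<lambda>c. s * Dc d A m c) = 0"
proof -
  have "measure_pmf.expectation (Ud d) (\<lambda>c. s * Dc d A m c) = (\<Sum>c\<in>hex_cells d. s * Dc d A m c) / card (hex_cells d)"
    unfolding Ud_def using cells_ne[of d] finite_cells[of d] assms(1)
    by (intro integral_pmf_of_set) auto
  also have "\<dots> = 0" using Dc_mean[OF assms] by (simp add: sum_distrib_left[symmetric])
  finally show ?thesis .
qed

lemma Dc_hoeffding:
  assumes "d \<ge> 1" "A \<subseteq> hex_rays d" "l > 0" "\<bar>s\<bar> = (1::real)"
  shows "(\<integral>\<^sup>+c. ennreal (exp (l * (s * Dc d A m c))) \<partial>Ud d)
     \<le> ennreal (exp (l\<^sup>2 * (3 * pbar d ^ m - - (3 * pbar d ^ m))\<^sup>2 / 8))"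
proof -
  have ax: "interval_bounded_random_variable (measure_pmf (Ud d)) (\<lambda>c. s * Dc d A m c) (- (3 * pbar d ^ m)) (3 * pbar d ^ m)"
  proof (unfold interval_bounded_random_variable_def interval_bounded_random_variable_axioms_def, intro conjI)
    show "prob_space (measure_pmf (Ud d))" by (rule measure_pmf.prob_space_axioms)
    show "(\<lambda>c. s * Dc d A m c) \<in> borel_measurable (measure_pmf (Ud d))" by simp
    have "\<forall>c\<in>set_pmf (Ud d). s * Dc d A m c \<in> {- (3 * pbar d ^ m)..3 * pbar d ^ m}"
    proof
      fix c assume "c \<in> set_pmf (Ud d)"
      then have c: "c \<in> hex_cells d" using Ud_set[OF assms(1)] by simp
      have b1: "Dc d A m c \<le> 3 * pbar d ^ m" "- (3 * pbar d ^ m) \<le> Dc d A m c"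
        using Dc_bounds[OF assms(1,2) c] by auto
      from assms(4) have "s = 1 \<or> s = -1" by auto
      then show "s * Dc d A m c \<in> {- (3 * pbar d ^ m)..3 * pbar d ^ m}" using b1 by auto
    qed
    then show "AE c in measure_pmf (Ud d). s * Dc d A m c \<in> {- (3 * pbar d ^ m)..3 * pbar d ^ m}"
      by (simp add: AE_measure_pmf_iff)
  qed
  show ?thesis
    by (rule interval_bounded_random_variable.Hoeffdings_lemma_nn_integral_0[OF ax assms(3) Dc_expect[OF assms(1,2)]])
qed

lemma mgf:
  assumes "d \<ge> 1" "l > 0" "\<bar>s\<bar> = (1::real)"
  shows "A \<subseteq> hex_rays d \<Longrightarrow> (\<integral>\<^sup>+\<omega>. ennreal (exp (l * (s * (Yc d A m \<omega> - mu d A m)))) \<partial>Mp d m)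
     \<le> ennreal (exp (l\<^sup>2 * (9/2) * (\<Sum>j<m. (pbar d ^ j)\<^sup>2)))"
proof (induction m arbitrary: A)
  case 0
  have "Mp d 0 = return_pmf (\<lambda>_. (0,0))" by (simp add: Mp_def)
  moreover have "Yc d A 0 \<omega> = mu d A 0" for \<omega> by (simp add: Yc_def mu_def)
  ultimately show ?case by simp
next
  case (Suc m)
  define E where "E = exp (l\<^sup>2 * (9/2) * (\<Sum>j<m. (pbar d ^ j)\<^sup>2))"
  have fA: "finite A" using finite_subset[OF Suc.prems finite_rays] .
  define A' where "A' c = {r\<in>A. c \<notin> hex_ray d (fst r) (snd r)}" for c
  have A'sub: "A' c \<subseteq> hex_rays d" for c using Suc.prems by (auto simp: A'_def)
  have key: "exp (l * (s * (Yc d A (Suc m) (fun_upd \<omega> m c) - mu d A (Suc m))))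
     = exp (l * (s * (Yc d (A' c) m \<omega> - mu d (A' c) m))) * exp (l * (s * Dc d A m c))" for \<omega> c
    unfolding Yc_Suc[OF fA] A'_def Dc_def by (simp add: exp_add[symmetric] algebra_simps)
  have "(\<integral>\<^sup>+\<omega>. ennreal (exp (l * (s * (Yc d A (Suc m) \<omega> - mu d A (Suc m))))) \<partial>Mp d (Suc m))
      = (\<integral>\<^sup>+c. \<integral>\<^sup>+\<omega>. ennreal (exp (l * (s * (Yc d A (Suc m) (fun_upd \<omega> m c) - mu d A (Suc m))))) \<partial>Mp d m \<partial>Ud d)"
    unfolding Mp_Suc by (simp add: nn_integral_pair_pmf' case_prod_beta)
  also have "\<dots> = (\<integral>\<^sup>+c. (\<integral>\<^sup>+\<omega>. ennreal (exp (l * (s * (Yc d (A' c) m \<omega> - mu d (A' c) m)))) \<partial>Mp d m)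
        * ennreal (exp (l * (s * Dc d A m c))) \<partial>Ud d)"
    unfolding key by (simp add: ennreal_mult nn_integral_multc)
  also have "\<dots> \<le> (\<integral>\<^sup>+c. ennreal E * ennreal (exp (l * (s * Dc d A m c))) \<partial>Ud d)"
    by (intro nn_integral_mono mult_right_mono) (use Suc.IH[OF A'sub] E_def in auto)
  also have "\<dots> = ennreal E * (\<integral>\<^sup>+c. ennreal (exp (l * (s * Dc d A m c))) \<partial>Ud d)"
    by (simp add: nn_integral_cmult)
  also have "\<dots> \<le> ennreal E * ennreal (exp (l\<^sup>2 * (3 * pbar d ^ m - - (3 * pbar d ^ m))\<^sup>2 / 8))"
    by (intro mult_left_mono Dc_hoeffding[OF assms(1) Suc.prems assms(2,3)]) auto
  also have "\<dots> = ennreal (exp (l\<^sup>2 * (9/2) * (\<Sum>j<Suc m. (pbar d ^ j)\<^sup>2)))"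
    unfolding E_def by (simp add: ennreal_mult[symmetric] exp_add[symmetric] algebra_simps power2_eq_square)
  finally show ?case .
qed


lemma tail:
  assumes "d \<ge> 1" "l > 0" "\<bar>s\<bar> = (1::real)" "A \<subseteq> hex_rays d"
  shows "measure_pmf.prob (Mp d m) {\<omega>. s * (Yc d A m \<omega> - mu d A m) \<ge> \<delta>}
     \<le> exp (- (l * \<delta>)) * exp (l\<^sup>2 * (9/2) * (\<Sum>j<m. (pbar d ^ j)\<^sup>2))"
proof -
  define Z where "Z \<omega> = s * (Yc d A m \<omega> - mu d A m)" for \<omega>
  define B where "B = {\<omega>. s * (Yc d A m \<omega> - mu d A m) \<ge> \<delta>}"
  have "ennreal (measure_pmf.prob (Mp d m) B) = emeasure (Mp d m) B"
    by (simp add: measure_pmf.emeasure_eq_measure)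
  also have "\<dots> = (\<integral>\<^sup>+\<omega>. indicator B \<omega> \<partial>Mp d m)" by simp
  also have "\<dots> \<le> (\<integral>\<^sup>+\<omega>. ennreal (exp (l * Z \<omega>)) * ennreal (exp (- (l * \<delta>))) \<partial>Mp d m)"
  proof (intro nn_integral_mono)
    fix \<omega>
    show "indicator B \<omega> \<le> ennreal (exp (l * Z \<omega>)) * ennreal (exp (- (l * \<delta>)))"
    proof (cases "\<omega> \<in> B")
      case True
      then have "Z \<omega> \<ge> \<delta>" by (simp add: B_def Z_def)
      then have "l * Z \<omega> - l * \<delta> \<ge> 0" using assms(2)
        by (metis diff_ge_0_iff_ge mult_left_mono less_imp_le)
      then have "1 \<le> exp (l * Z \<omega>) * exp (- (l * \<delta>))"
        by (simp add: exp_add[symmetric])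
      then have "ennreal 1 \<le> ennreal (exp (l * Z \<omega>) * exp (- (l * \<delta>)))"
        by (rule ennreal_leI)
      then show ?thesis using True by (simp add: ennreal_mult)
    next
      case False then show ?thesis by simp
    qed
  qed
  also have "\<dots> = (\<integral>\<^sup>+\<omega>. ennreal (exp (l * Z \<omega>)) \<partial>Mp d m) * ennreal (exp (- (l * \<delta>)))"
    by (simp add: nn_integral_multc)
  also have "\<dots> \<le> ennreal (exp (l\<^sup>2 * (9/2) * (\<Sum>j<m. (pbar d ^ j)\<^sup>2))) * ennreal (exp (- (l * \<delta>)))"
    unfolding Z_def by (intro mult_right_mono mgf[OF assms(1,2,3,4)]) auto
  also have "\<dots> = ennreal (exp (- (l * \<delta>)) * exp (l\<^sup>2 * (9/2) * (\<Sum>j<m. (pbar d ^ j)\<^sup>2)))"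
    by (simp add: ennreal_mult[symmetric] mult.commute)
  finally show ?thesis unfolding B_def by simp
qed

theorem proposition3p5:
  fixes d k :: nat and \<delta> :: real
  assumes "odd d" and "d \<ge> 3" and "k \<ge> 1" and "\<delta> > 0"
  shows "pbar d = 1 - 2 * (real d + 1) / (3 * (real d)\<^sup>2 + 1)
    \<and> measure_pmf.prob (draw_pmf d k) {\<omega>. \<bar>zero_count d k \<omega> - expected_zeros d k\<bar> \<ge> \<delta>}
        \<le> 2 * exp (- ((1 - pbar d ^ 2) / (18 * (1 - pbar d ^ (2 * k)))) * \<delta>\<^sup>2)"
proof
  show "pbar d = 1 - 2 * (real d + 1) / (3 * (real d)\<^sup>2 + 1)" by (rule pbar_val[OF assms(1,2)])
  have d1: "d \<ge> 1" using assms(2) by simp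
  define P where "P = pbar d"
  have P0: "0 < P" "P < 1" using pbar_bounds[OF assms(1,2)] P_def by auto
  define S where "S = (\<Sum>j<k. (P ^ j)\<^sup>2)"
  have "S = (\<Sum>j<k. (P\<^sup>2) ^ j)" unfolding S_def by (simp add: power_mult[symmetric] mult.commute)
  also have "\<dots> = (1 - (P\<^sup>2) ^ k) / (1 - P\<^sup>2)"
  proof -
    have "P\<^sup>2 \<noteq> 1" using P0 by (simp add: power2_eq_square) (metis less_irrefl mult_strict_mono' mult_1 less_eq_real_def)
    then show ?thesis by (simp add: sum_gp_strict)
  qed
  also have "(P\<^sup>2) ^ k = P ^ (2 * k)" by (simp add: power_mult)
  finally have Sform: "S = (1 - P ^ (2 * k)) / (1 - P\<^sup>2)" .
  have "S \<ge> (\<Sum>j\<in>{0}. (P ^ j)\<^sup>2)" unfolding S_def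
    by (rule sum_mono2) (use assms(3) in auto)
  then have Spos: "S \<ge> 1" by simp
  define l where "l = \<delta> / (9 * S)"
  have lpos: "l > 0" unfolding l_def using assms(4) Spos by simp
  have expo: "exp (- (l * \<delta>)) * exp (l\<^sup>2 * (9/2) * S) = exp (- ((1 - P ^ 2) / (18 * (1 - P ^ (2 * k)))) * \<delta>\<^sup>2)"
  proof -
    have "- (l * \<delta>) + l\<^sup>2 * (9/2) * S = - (\<delta>\<^sup>2 / (18 * S))"
      unfolding l_def using Spos by (simp add: field_simps power2_eq_square)
    also have "\<dots> = - ((1 - P ^ 2) / (18 * (1 - P ^ (2 * k)))) * \<delta>\<^sup>2"
      unfolding Sform by (simp add: field_simps)
    finally show ?thesis by (simp add: exp_add[symmetric])
  qed
  have eqs: "draw_pmf d k = Mp d k" "zero_count d k = Yc d (hex_rays d) k"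
      "expected_zeros d k = mu d (hex_rays d) k"
    by (simp_all add: draw_pmf_def Mp_def Ud_def zero_count_def zero_meas_def Yc_def fun_eq_iff
         expected_zeros_def mu_def qr_def)
  define B where "B s = {\<omega>. s * (Yc d (hex_rays d) k \<omega> - mu d (hex_rays d) k) \<ge> \<delta>}" for s :: real
  have tb: "measure_pmf.prob (Mp d k) (B s) \<le> exp (- ((1 - P ^ 2) / (18 * (1 - P ^ (2 * k)))) * \<delta>\<^sup>2)"
    if "\<bar>s\<bar> = 1" for s
    using tail[OF d1 lpos that order_refl, of k \<delta>] expo unfolding B_def S_def P_def by simp
  have "{\<omega>. \<bar>zero_count d k \<omega> - expected_zeros d k\<bar> \<ge> \<delta>} \<subseteq> B 1 \<union> B (-1)"
    unfolding eqs B_def by auto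
  then have "measure_pmf.prob (draw_pmf d k) {\<omega>. \<bar>zero_count d k \<omega> - expected_zeros d k\<bar> \<ge> \<delta>}
      \<le> measure_pmf.prob (Mp d k) (B 1 \<union> B (-1))"
    unfolding eqs(1) by (rule measure_pmf.finite_measure_mono) simp
  also have "\<dots> \<le> measure_pmf.prob (Mp d k) (B 1) + measure_pmf.prob (Mp d k) (B (-1))"
    by (rule measure_Un_le) auto
  also have "\<dots> \<le> 2 * exp (- ((1 - P ^ 2) / (18 * (1 - P ^ (2 * k)))) * \<delta>\<^sup>2)"
    using tb[of 1] tb[of "-1"] by simp
  finally show "measure_pmf.prob (draw_pmf d k) {\<omega>. \<bar>zero_count d k \<omega> - expected_zeros d k\<bar> \<ge> \<delta>}
        \<le> 2 * exp (- ((1 - pbar d ^ 2) / (18 * (1 - pbar d ^ (2 * k)))) * \<delta>\<^sup>2)"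
    unfolding P_def .
qed

end
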